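(* If a Banach space $X$ has a seminormalized quasisubsymmetric (Schauder) basis, then $\ell_\infty$ embeds isomorphically into $\mathcal{L}(X^* )$.
   Context: $X^*$ is the dual of $X$ and $\mathcal{L}(Y)$ is the space of bounded linear operators on $Y$ with the operator norm. A sequence $(e_n)$ is seminormalized if $0<\inf_n\|e_n\|\le\sup_n\|e_n\|<\infty$. For basic sequences, $(x_n)$ dominates $(y_n)$ if there is $C>0$ with $\|\sum a_ny_n\|\le C\|\sum a_nx_n\|$ for all finitely supported scalar sequences $(a_n)$. A basic sequence $(e_n)$ is quasisubsymmetric if for any two increasing sequences $(k_n),(\ell_n)$ of positive integers with $k_n\le\ell_n$ for all $n$, $(e_{k_n})$ dominates $(e_{\ell_n})$. *)

theory Defs
  imports "HOL-Analysis.Analysis"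
begin

definition schauder_basis :: "(nat \<Rightarrow> 'a::real_normed_vector) \<Rightarrow> bool" where
  "schauder_basis e \<longleftrightarrow> (\<forall>x. \<exists>!a::nat \<Rightarrow> real. (\<lambda>n. a n *\<^sub>R e n) sums x)"

definition seminormalized :: "(nat \<Rightarrow> 'a::real_normed_vector) \<Rightarrow> bool" where
  "seminormalized e \<longleftrightarrow> (\<exists>a b. 0 < a \<and> (\<forall>n. a \<le> norm (e n) \<and> norm (e n) \<le> b))"

definition dominates :: "(nat \<Rightarrow> 'a::real_normed_vector) \<Rightarrow> (nat \<Rightarrow> 'a) \<Rightarrow> bool" where
  "dominates x y \<longleftrightarrow> (\<exists>C>0. \<forall>(a::nat \<Rightarrow> real) N.
      norm (\<Sum>n<N. a n *\<^sub>R y n) \<le> C * norm (\<Sum>n<N. a n *\<^sub>R x n))"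

definition quasisubsymmetric :: "(nat \<Rightarrow> 'a::real_normed_vector) \<Rightarrow> bool" where
  "quasisubsymmetric e \<longleftrightarrow> (\<forall>k l::nat \<Rightarrow> nat. strict_mono k \<longrightarrow> strict_mono l \<longrightarrow>
      (\<forall>n. k n \<le> l n) \<longrightarrow> dominates (e \<circ> k) (e \<circ> l))"

definition embeds_isomorphically :: "('a::real_normed_vector \<Rightarrow> 'b::real_normed_vector) \<Rightarrow> bool" where
  "embeds_isomorphically T \<longleftrightarrow> bounded_linear T \<and> (\<exists>c>0. \<forall>x. c * norm x \<le> norm (T x))"

end

theory Submission
  imports Defs
begin

locale qsb =
  fixes e :: "nat \<Rightarrow> 'a::banach"
  assumes basis: "schauder_basis e" and semi: "seminormalized e" and qs: "quasisubsymmetric e"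
begin

definition coef :: "'a \<Rightarrow> nat \<Rightarrow> real" where
  "coef x = (THE a. (\<lambda>n. a n *\<^sub>R e n) sums x)"

lemma ex1_coef: "\<exists>!a. (\<lambda>n. a n *\<^sub>R e n) sums x"
  using basis unfolding schauder_basis_def by blast

lemma coef_sums: "(\<lambda>n. coef x n *\<^sub>R e n) sums x"
  unfolding coef_def by (rule theI'[OF ex1_coef])

lemma coef_unique: "(\<lambda>n. a n *\<^sub>R e n) sums x \<Longrightarrow> a = coef x"
  unfolding coef_def by (rule the1_equality[OF ex1_coef, symmetric])

lemma coef_add: "coef (x + y) = (\<lambda>n. coef x n + coef y n)"
  by (rule coef_unique[symmetric]) (use sums_add[OF coef_sums coef_sums] in \<open>simp add: scaleR_add_left\<close>)

lemma coef_scale: "coef (c *\<^sub>R x) = (\<lambda>n. c * coef x n)"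
  by (rule coef_unique[symmetric]) (use sums_scaleR_right[OF coef_sums, of c x] in \<open>simp\<close>)

lemma coef_diff: "coef (x - y) = (\<lambda>n. coef x n - coef y n)"
  by (rule coef_unique[symmetric]) (use sums_diff[OF coef_sums coef_sums] in \<open>simp add: scaleR_diff_left\<close>)

lemma coef_e: "coef (e m) = (\<lambda>n. if n = m then 1 else 0)"
proof (rule coef_unique[symmetric])
  have eq: "(\<lambda>n. (if n = m then 1 else 0) *\<^sub>R e n) = (\<lambda>n. if n = m then e n else 0)"
    by (simp add: fun_eq_iff)
  show "(\<lambda>n. (if n = m then 1 else 0) *\<^sub>R e n) sums e m"
    unfolding eq by (rule sums_single)
qed

lemma semiE: obtains a b where "0 < a" "\<And>n. a \<le> norm (e n)" "\<And>n. norm (e n) \<le> b"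
  using semi unfolding seminormalized_def by blast

definition P :: "nat \<Rightarrow> 'a \<Rightarrow> 'a" where
  "P N x = (\<Sum>n<N. coef x n *\<^sub>R e n)"

lemma P_tendsto: "(\<lambda>N. P N x) \<longlonglongrightarrow> x"
  using coef_sums[of x] unfolding sums_def P_def .

lemma P_add: "P N (x + y) = P N x + P N y"
  by (simp add: P_def coef_add scaleR_add_left sum.distrib)

lemma P_scale: "P N (c *\<^sub>R x) = c *\<^sub>R P N x"
  by (simp add: P_def coef_scale scaleR_sum_right)

lemma P_diff: "P N (x - y) = P N x - P N y"
  by (simp add: P_def coef_diff scaleR_diff_left sum_subtractf)

lemma P_bdd: "bdd_above (range (\<lambda>N. norm (P N x)))"
proof -
  have "Bseq (\<lambda>N. P N x)" using P_tendsto by (intro convergent_imp_Bseq convergentI)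
  then obtain B where "\<And>N. norm (P N x) \<le> B" by (auto simp: Bseq_def)
  then show ?thesis by (auto intro!: bdd_aboveI)
qed

definition q :: "'a \<Rightarrow> real" where
  "q x = (SUP N. norm (P N x))"

lemma q_ge: "norm (P N x) \<le> q x"
  unfolding q_def by (rule cSUP_upper[OF UNIV_I P_bdd])

lemma q_le: "(\<And>N. norm (P N x) \<le> c) \<Longrightarrow> q x \<le> c"
  unfolding q_def by (rule cSUP_least) auto

lemma q_add: "q (x + y) \<le> q x + q y"
  by (rule q_le) (metis P_add add_mono norm_triangle_ineq order_trans q_ge)

lemma q_diff: "q (x - y) \<le> q x + q y"
  by (rule q_le) (metis P_diff add_mono norm_triangle_ineq4 order_trans q_ge)

lemma q_scale: "q (c *\<^sub>R x) = \<bar>c\<bar> * q x"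
proof (cases "c = 0")
  case True
  have c0: "coef 0 = (\<lambda>n. 0)" using coef_scale[of 0 0] by simp
  then show ?thesis using True by (simp add: q_def P_def)
next
  case False
  have 1: "q (c *\<^sub>R x) \<le> \<bar>c\<bar> * q x"
    by (rule q_le) (simp add: P_scale mult_left_mono q_ge)
  have "norm (P N x) \<le> inverse \<bar>c\<bar> * q (c *\<^sub>R x)" for N
  proof -
    have "norm (P N (c *\<^sub>R x)) = \<bar>c\<bar> * norm (P N x)" by (simp add: P_scale)
    with q_ge[of N "c *\<^sub>R x"] False show ?thesis by (simp add: field_simps)
  qed
  then have "q x \<le> inverse \<bar>c\<bar> * q (c *\<^sub>R x)" by (rule q_le)
  then have "\<bar>c\<bar> * q x \<le> q (c *\<^sub>R x)" using False by (simp add: field_simps)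
  with 1 show ?thesis by simp
qed

lemma norm_le_q: "norm x \<le> q x"
proof -
  have "(\<lambda>N. norm (P N x)) \<longlonglongrightarrow> norm x" using P_tendsto by (rule tendsto_norm)
  then show ?thesis by (rule LIMSEQ_le_const2) (auto intro: q_ge)
qed

lemma q_nonneg: "0 \<le> q x"
  using norm_le_q[of x] norm_ge_zero order_trans by blast

lemma coef_diffP: "coef x n *\<^sub>R e n = P (Suc n) x - P n x"
  by (simp add: P_def)

lemma coef_bound_q:
  assumes "0 < a" "\<And>n. a \<le> norm (e n)"
  shows "\<bar>coef x n\<bar> \<le> 2 * q x / a"
proof -
  have "\<bar>coef x n\<bar> * a \<le> \<bar>coef x n\<bar> * norm (e n)" using assms by (simp add: mult_left_mono)
  also have "\<dots> = norm (P (Suc n) x - P n x)" by (metis coef_diffP norm_scaleR)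
  also have "\<dots> \<le> q x + q x" by (metis add_mono norm_triangle_ineq4 order_trans q_ge)
  finally show ?thesis using assms by (simp add: field_simps)
qed

end

lemma norm3: "norm ((a::'b::real_normed_vector) + b + c) \<le> norm a + norm b + norm c"
  by (rule order_trans[OF norm_triangle_ineq add_right_mono[OF norm_triangle_ineq]])

context qsb begin

lemma q_series:
  assumes zs: "z sums y" and sq: "summable (\<lambda>k. q (z k))"
  shows "q y \<le> (\<Sum>k. q (z k))"
proof -
  obtain a b where a: "0 < a" "\<And>n. a \<le> norm (e n)" using semiE by metis
  define S where "S = (\<Sum>k. q (z k))"
  have cs: "summable (\<lambda>k. coef (z k) n)" for n
  proof (rule summable_comparison_test'[where N=0])
    show "summable (\<lambda>k. 2 * q (z k) / a)" using sq by (intro summable_divide summable_mult)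
    show "norm (coef (z k) n) \<le> 2 * q (z k) / a" for k using coef_bound_q[OF a] by simp
  qed
  define c where "c n = (\<Sum>k. coef (z k) n)" for n
  define Q where "Q N = (\<Sum>n<N. c n *\<^sub>R e n)" for N
  have PQ: "(\<lambda>k. P N (z k)) sums Q N" for N
    unfolding P_def Q_def
    by (intro sums_sum sums_scaleR_left) (use cs summable_sums c_def in auto)
  have QS: "norm (Q N) \<le> S" for N
  proof -
    have "Q N = (\<Sum>k. P N (z k))" using PQ sums_unique by blast
    also have "norm \<dots> \<le> S" unfolding S_def by (rule norm_suminf_le[OF q_ge sq])
    finally show ?thesis .
  qed
  have Qy: "Q \<longlonglongrightarrow> y"
  proof (rule LIMSEQ_I)
    fix r :: real assume r: "0 < r"
    obtain K1 where K1: "\<And>K. K \<ge> K1 \<Longrightarrow> norm (\<Sum>i. q (z (i + K))) < r/3"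
      using suminf_exist_split[OF _ sq, of "r/3"] r by auto
    have "(\<lambda>K. \<Sum>k<K. z k) \<longlonglongrightarrow> y" using zs unfolding sums_def .
    then obtain K2 where K2: "\<And>K. K \<ge> K2 \<Longrightarrow> norm ((\<Sum>k<K. z k) - y) < r/3"
      using LIMSEQ_D r by (metis zero_less_divide_iff zero_less_numeral)
    define K where "K = max K1 K2"
    have "(\<lambda>N. \<Sum>k<K. P N (z k)) \<longlonglongrightarrow> (\<Sum>k<K. z k)"
      by (intro tendsto_sum P_tendsto)
    then obtain N0 where N0: "\<And>N. N \<ge> N0 \<Longrightarrow> norm ((\<Sum>k<K. P N (z k)) - (\<Sum>k<K. z k)) < r/3"
      using LIMSEQ_D r by (metis zero_less_divide_iff zero_less_numeral)
    show "\<exists>no. \<forall>n\<ge>no. norm (Q n - y) < r"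
    proof (intro exI allI impI)
      fix N assume N: "N \<ge> N0"
      have sP: "summable (\<lambda>k. P N (z k))" using PQ sums_summable by blast
      have split: "Q N = (\<Sum>k. P N (z (k + K))) + (\<Sum>k<K. P N (z k))"
      proof -
        have "Q N = (\<Sum>k. P N (z k))" using PQ sums_unique by blast
        then show ?thesis using suminf_split_initial_segment[OF sP, of K] by simp
      qed
      have t1: "norm (\<Sum>k. P N (z (k + K))) \<le> (\<Sum>k. q (z (k + K)))"
        by (rule norm_suminf_le[OF q_ge]) (use summable_iff_shift[of "\<lambda>k. q (z k)" K] sq in simp)
      have t1': "(\<Sum>k. q (z (k + K))) < r/3" using K1[of K] K_def by auto
      have t2: "norm ((\<Sum>k<K. P N (z k)) - (\<Sum>k<K. z k)) < r/3" using N0 N by blast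
      have t3: "norm ((\<Sum>k<K. z k) - y) < r/3" using K2[of K] K_def by auto
      have "Q N - y = (\<Sum>k. P N (z (k + K))) + ((\<Sum>k<K. P N (z k)) - (\<Sum>k<K. z k)) + ((\<Sum>k<K. z k) - y)"
        using split by simp
      then have "norm (Q N - y) \<le> norm (\<Sum>k. P N (z (k + K))) + norm ((\<Sum>k<K. P N (z k)) - (\<Sum>k<K. z k)) + norm ((\<Sum>k<K. z k) - y)"
        by (simp only: norm3)
      then show "norm (Q N - y) < r" using t1 t1' t2 t3 by linarith
    qed
  qed
  have "c = coef y" by (rule coef_unique) (use Qy in \<open>simp add: sums_def Q_def[abs_def]\<close>)
  then have "P N y = Q N" for N by (simp add: P_def Q_def)
  then have "q y \<le> S" using QS by (intro q_le) simp
  then show ?thesis by (simp add: S_def)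
qed

end

context qsb begin

lemma q_zero: "q 0 = 0"
  using q_scale[of 0 0] by simp

lemma approx_exists: "\<exists>L\<ge>0. \<forall>y \<delta>. \<delta> > 0 \<longrightarrow> (\<exists>z. q z \<le> L * norm y \<and> norm (y - z) \<le> \<delta>)"
proof -
  define B where "B m = closure {x. q x \<le> real m}" for m :: nat
  have "\<exists>m. interior (B m) \<noteq> {}"
  proof (rule ccontr)
    assume "\<not> ?thesis"
    then have emp: "\<And>m. interior (B m) = {}" by blast
    have "euclidean interior_of \<Union>(range B) = {}"
    proof (rule Baire_category_alt)
      show "completely_metrizable_space (euclidean::'a topology) \<or> locally_compact_space (euclidean::'a topology) \<and> regular_space (euclidean::'a topology)"
        by (simp add: completely_metrizable_space_euclidean)
      show "countable (range B)" by simp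
      fix T assume "T \<in> range B"
      then obtain m where Tm: "T = B m" by blast
      have "closed (B m)" by (simp add: B_def)
      then show "closedin euclidean T \<and> euclidean interior_of T = {}" using emp[of m] Tm by simp
    qed
    moreover have "\<Union>(range B) = UNIV"
    proof -
      have "x \<in> \<Union>(range B)" for x
      proof -
        obtain m :: nat where "q x \<le> real m" using real_arch_simple by blast
        then have "x \<in> {x. q x \<le> real m}" by simp
        then have "x \<in> B m" unfolding B_def by (rule closure_subset[THEN subsetD])
        then show ?thesis by (rule UN_I[OF UNIV_I])
      qed
      then show ?thesis by auto
    qed
    ultimately show False by simp
  qed
  then obtain m x0 where "x0 \<in> interior (B m)" by blast
  then obtain \<epsilon> where \<epsilon>: "\<epsilon> > 0" "ball x0 \<epsilon> \<subseteq> B m" using mem_interior by blast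
  have app: "\<exists>z. q z \<le> 2 * real m \<and> norm (y - z) < \<delta>" if y: "norm y < \<epsilon>" and d: "\<delta> > 0" for y \<delta>
  proof -
    have "x0 \<in> B m" using \<epsilon> by auto
    moreover have "x0 + y \<in> B m" using \<epsilon> y by (auto simp: dist_norm)
    ultimately obtain u v where u: "q u \<le> m" "dist u (x0 + y) < \<delta>/2" and v: "q v \<le> m" "dist v x0 < \<delta>/2"
      unfolding B_def closure_approachable using d by (metis half_gt_zero mem_Collect_eq)
    have "q (u - v) \<le> 2 * real m" using q_diff[of u v] u v by linarith
    moreover have "norm (y - (u - v)) < \<delta>"
    proof -
      have "y - (u - v) = (x0 + y - u) - (x0 - v)" by (simp add: algebra_simps)
      then have "norm (y - (u - v)) \<le> norm (x0 + y - u) + norm (x0 - v)"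
        by (metis norm_triangle_ineq4)
      also have "\<dots> < \<delta>" using u v by (simp add: dist_norm norm_minus_commute)
      finally show ?thesis .
    qed
    ultimately show ?thesis by blast
  qed
  define L where "L = 4 * real m / \<epsilon>"
  have "L \<ge> 0" using \<epsilon> by (simp add: L_def)
  moreover have "\<exists>z. q z \<le> L * norm y \<and> norm (y - z) \<le> \<delta>" if d: "\<delta> > 0" for y \<delta>
  proof (cases "y = 0")
    case True
    then show ?thesis by (intro exI[of _ 0]) (simp add: q_zero d less_imp_le)
  next
    case False
    define s where "s = \<epsilon> / (2 * norm y)"
    have s: "s > 0" using False \<epsilon> by (simp add: s_def)
    have "norm (s *\<^sub>R y) < \<epsilon>" using False \<epsilon> by (simp add: s_def)
    then obtain z' where z': "q z' \<le> 2 * real m" "norm (s *\<^sub>R y - z') < s * \<delta>"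
      using app s d by (meson mult_pos_pos)
    define z where "z = inverse s *\<^sub>R z'"
    have "q z = inverse s * q z'" using s by (simp add: z_def q_scale)
    also have "\<dots> \<le> inverse s * (2 * real m)" using z' s by (simp add: mult_left_mono)
    also have "\<dots> = L * norm y" using False \<epsilon> by (simp add: s_def L_def field_simps)
    finally have 1: "q z \<le> L * norm y" .
    have "y - z = inverse s *\<^sub>R (s *\<^sub>R y - z')" using s by (simp add: z_def algebra_simps)
    then have "norm (y - z) = inverse s * norm (s *\<^sub>R y - z')" using s by simp
    also have "\<dots> \<le> inverse s * (s * \<delta>)" using z' s by (intro mult_left_mono) auto
    also have "\<dots> = \<delta>" using s by simp
    finally show ?thesis using 1 by blast
  qed
  ultimately show ?thesis by blast
qed

lemma basis_const: "\<exists>\<beta>>0. \<forall>x. q x \<le> \<beta> * norm x"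
proof -
  obtain L where L: "L \<ge> 0" "\<And>y \<delta>. \<delta> > 0 \<Longrightarrow> \<exists>z. q z \<le> L * norm y \<and> norm (y - z) \<le> \<delta>"
    using approx_exists by blast
  have "q y \<le> (2 * L) * norm y" for y
  proof (cases "y = 0")
    case True then show ?thesis by (simp add: q_zero)
  next
    case False
    have "\<forall>w k. \<exists>z. q z \<le> L * norm w \<and> norm (w - z) \<le> norm y * (1/2)^Suc k"
      by (intro allI, rule L(2)) (simp add: False)
    then obtain Z where Z: "\<And>w k. q (Z w k) \<le> L * norm w" "\<And>w k. norm (w - Z w k) \<le> norm y * (1/2)^Suc k"
      by metis
    define r where "r = rec_nat y (\<lambda>k w. w - Z w k)"
    have r0: "r 0 = y" and rS: "\<And>k. r (Suc k) = r k - Z (r k) k" by (simp_all add: r_def)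
    have rn: "norm (r k) \<le> norm y * (1/2)^k" for k
    proof (cases k)
      case 0 then show ?thesis by (simp add: r0)
    next
      case (Suc j) then show ?thesis using Z(2)[of "r j" j] by (simp add: rS)
    qed
    define z where "z k = Z (r k) k" for k
    have qz: "q (z k) \<le> L * norm y * (1/2)^k" for k
      using Z(1)[of "r k" k] rn[of k] L(1) unfolding z_def
      by (metis (no_types, opaque_lifting) mult.assoc mult_left_mono order_trans)
    have ps: "(\<Sum>i<k. z i) = y - r k" for k
      by (induction k) (simp_all add: r0 rS z_def)
    have "r \<longlonglongrightarrow> 0"
    proof -
      have lim: "(\<lambda>k. norm y * (1/2::real)^k) \<longlonglongrightarrow> 0"
        using tendsto_mult[OF tendsto_const LIMSEQ_power_zero[of "1/2::real"], of "norm y"] by simp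
      show ?thesis
        by (rule Lim_null_comparison[OF always_eventually[OF allI[OF rn]] lim])
    qed
    then have "(\<lambda>k. y - r k) \<longlonglongrightarrow> y - 0" by (intro tendsto_diff tendsto_const)
    then have zs: "z sums y" unfolding sums_def ps by simp
    have geo: "summable (\<lambda>k. L * norm y * (1/2::real)^k)"
      by (intro summable_mult summable_geometric) simp
    have sq: "summable (\<lambda>k. q (z k))"
      by (rule summable_comparison_test'[OF geo]) (simp add: q_nonneg qz)
    have "q y \<le> (\<Sum>k. q (z k))" by (rule q_series[OF zs sq])
    also have "\<dots> \<le> (\<Sum>k. L * norm y * (1/2::real)^k)" by (rule suminf_le[OF qz sq geo])
    also have "\<dots> = L * norm y * 2" using suminf_geometric[of "1/2::real"] by (simp add: suminf_mult)
    finally show ?thesis by simp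
  qed
  moreover have "2 * L * norm x \<le> (2 * L + 1) * norm x" for x
    by (rule mult_right_mono) auto
  ultimately have "q x \<le> (2 * L + 1) * norm x" for x
    by (meson order_trans)
  moreover have "2 * L + 1 > 0" using L(1) by simp
  ultimately show ?thesis by blast
qed

end

context qsb begin

definition V :: "(nat \<Rightarrow> bool) \<Rightarrow> (nat \<Rightarrow> real) \<Rightarrow> nat \<Rightarrow> 'a" where
  "V t a N = (\<Sum>j<N. a j *\<^sub>R e (2*j + of_bool (t j)))"

definition V0 :: "(nat \<Rightarrow> real) \<Rightarrow> nat \<Rightarrow> 'a" where
  "V0 a N = (\<Sum>j<N. a j *\<^sub>R e (2*j))"

lemma sm2: "strict_mono (\<lambda>j::nat. 2*j + of_bool (t j))"
proof (rule strict_monoI)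
  fix m n :: nat assume "m < n"
  moreover have "of_bool (t m) \<le> (1::nat)" by simp
  ultimately show "2*m + of_bool (t m) < 2*n + of_bool (t n)" by linarith
qed

lemma dom_t: "\<exists>C>0. \<forall>a N. norm (V t a N) \<le> C * norm (V0 a N)"
proof -
  have sm: "strict_mono (\<lambda>j::nat. 2*j)" by (rule strict_monoI) simp
  have "dominates (e \<circ> (\<lambda>j. 2*j)) (e \<circ> (\<lambda>j. 2*j + of_bool (t j)))"
    using qs sm sm2[of t] unfolding quasisubsymmetric_def by simp
  then show ?thesis by (simp add: dominates_def V_def V0_def o_def)
qed

lemma V_cong: "(\<And>j. j < N \<Longrightarrow> t j = t' j) \<Longrightarrow> V t a N = V t' a N"
  unfolding V_def by (rule sum.cong) auto

lemma cylinder: "\<exists>K M s. \<forall>t. (\<forall>j<M. t j = s j) \<longrightarrow> (\<forall>a N. norm (V t a N) \<le> K * norm (V0 a N))"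
proof (rule ccontr)
  assume H: "\<not> ?thesis"
  have H': "\<forall>K M s. \<exists>t. (\<forall>j<M. t j = s j) \<and> (\<exists>a N. K * norm (V0 a N) < norm (V t a N))"
    using H by (simp add: not_le)
  obtain T A NN where TAN: "\<And>K M s. (\<forall>j<M. T K M s j = s j) \<and> K * norm (V0 (A K M s) (NN K M s)) < norm (V (T K M s) (A K M s) (NN K M s))"
    using H' by metis
  define st where "st = rec_nat ((\<lambda>_. False), 0::nat) (\<lambda>k p. (T (real k) (snd p) (fst p), max (snd p + 1) (NN (real k) (snd p) (fst p))))"
  define S where "S k = fst (st k)" for k
  define Mk where "Mk k = snd (st k)" for k
  have S0: "Mk 0 = 0" by (simp add: Mk_def st_def)
  have SS: "S (Suc k) = T (real k) (Mk k) (S k)" for k by (simp add: S_def Mk_def st_def)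
  have MS: "Mk (Suc k) = max (Mk k + 1) (NN (real k) (Mk k) (S k))" for k by (simp add: S_def Mk_def st_def)
  have Mk_ge: "Mk k \<ge> k" for k by (induction k) (auto simp: S0 MS)
  have Mk_mono: "Mk k \<le> Mk k'" if "k \<le> k'" for k k'
    using that by (induction k' rule: dec_induct) (auto simp: MS)
  have agree: "S k' j = S k j" if "k \<le> k'" "j < Mk k" for k k' j
    using that
  proof (induction k' rule: dec_induct)
    case base then show ?case by simp
  next
    case (step k')
    have "j < Mk k'" using step.prems Mk_mono[OF step.hyps(1)] by linarith
    then have "S (Suc k') j = S k' j" using TAN[where K="real k'" and M="Mk k'" and s="S k'"] by (simp add: SS)
    then show ?case using step.IH step.prems by simp
  qed
  define tt where "tt j = S (Suc j) j" for j
  have agree2: "tt j = S (Suc k) j" if "j < Mk (Suc k)" for j k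
  proof (cases "j \<le> k")
    case True
    have "j < Mk (Suc j)" using Mk_ge[of "Suc j"] by simp
    then show ?thesis using agree[of "Suc j" "Suc k" j] True by (simp add: tt_def)
  next
    case False
    then show ?thesis using agree[of "Suc k" "Suc j" j] that by (simp add: tt_def)
  qed
  obtain C where C: "C > 0" "\<And>a N. norm (V tt a N) \<le> C * norm (V0 a N)"
    using dom_t by blast
  obtain k :: nat where k: "C \<le> real k" using real_arch_simple by blast
  define a where "a = A (real k) (Mk k) (S k)"
  define N where "N = NN (real k) (Mk k) (S k)"
  have bad: "real k * norm (V0 a N) < norm (V (S (Suc k)) a N)"
    using TAN[where K="real k" and M="Mk k" and s="S k"] by (simp add: SS a_def N_def)
  have "N \<le> Mk (Suc k)" by (simp add: MS N_def)
  then have "V tt a N = V (S (Suc k)) a N" by (intro V_cong agree2) simp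
  then have "real k * norm (V0 a N) < C * norm (V0 a N)" using bad C(2)[of a N] by simp
  moreover have "C * norm (V0 a N) \<le> real k * norm (V0 a N)" using k by (simp add: mult_right_mono)
  ultimately show False by simp
qed

end

lemma sum_shift_zero:
  fixes f :: "nat \<Rightarrow> 'b::comm_monoid_add"
  shows "(\<Sum>j<N+M. if j < M then 0 else f (j - M)) = (\<Sum>i<N. f i)"
  by (induction N) simp_all

lemma cube_bound:
  fixes F :: "(nat \<Rightarrow> real) \<Rightarrow> 'b::real_normed_vector"
  assumes lin: "\<And>t s \<alpha> \<beta>. F (\<lambda>i. \<alpha> * t i + \<beta> * s i) = \<alpha> *\<^sub>R F t + \<beta> *\<^sub>R F s"
    and ind: "\<And>w. norm (F (\<lambda>i. of_bool (w i))) \<le> B"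
  shows "(\<forall>i. 0 \<le> t i \<and> t i \<le> 1) \<longrightarrow> (\<forall>i\<ge>n. t i = 0 \<or> t i = 1) \<longrightarrow> norm (F t) \<le> B"
proof (induction n arbitrary: t)
  case 0
  show ?case
  proof (intro impI)
    assume "\<forall>i\<ge>0. t i = 0 \<or> t i = 1"
    then have eq: "t = (\<lambda>i. of_bool (t i = 1))"
    proof -
      assume a: "\<forall>i\<ge>0. t i = 0 \<or> t i = 1"
      show ?thesis
      proof (rule ext)
        fix i
        have "t i = 0 \<or> t i = 1" using a by simp
        then show "t i = of_bool (t i = 1)" by auto
      qed
    qed
    have F_eq: "F t = F (\<lambda>i. of_bool (t i = 1))" by (rule arg_cong[where f=F, OF eq])
    show "norm (F t) \<le> B" unfolding F_eq by (rule ind)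
  qed
next
  case (Suc n)
  show ?case
  proof (intro impI)
    assume r: "\<forall>i. 0 \<le> t i \<and> t i \<le> 1" and b: "\<forall>i\<ge>Suc n. t i = 0 \<or> t i = 1"
    define t1 where "t1 = t(n := 1)"
    define t0 where "t0 = t(n := 0)"
    have "\<forall>i. 0 \<le> t1 i \<and> t1 i \<le> 1" using r by (simp add: t1_def)
    moreover have "\<forall>i\<ge>n. t1 i = 0 \<or> t1 i = 1" using b by (auto simp: t1_def)
    ultimately have h1: "norm (F t1) \<le> B" using Suc.IH[of t1] by blast
    have "\<forall>i. 0 \<le> t0 i \<and> t0 i \<le> 1" using r by (simp add: t0_def)
    moreover have "\<forall>i\<ge>n. t0 i = 0 \<or> t0 i = 1" using b by (auto simp: t0_def)
    ultimately have h0: "norm (F t0) \<le> B" using Suc.IH[of t0] by blast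
    have teq: "t = (\<lambda>i. t n * t1 i + (1 - t n) * t0 i)"
      by (auto simp: fun_eq_iff t1_def t0_def algebra_simps)
    have tn: "0 \<le> t n" "t n \<le> 1" using r by auto
    have "F t = F (\<lambda>i. t n * t1 i + (1 - t n) * t0 i)" by (rule arg_cong[where f=F, OF teq])
    also have "\<dots> = t n *\<^sub>R F t1 + (1 - t n) *\<^sub>R F t0" by (rule lin)
    finally have "norm (F t) = norm (t n *\<^sub>R F t1 + (1 - t n) *\<^sub>R F t0)" by simp
    also have "\<dots> \<le> norm (t n *\<^sub>R F t1) + norm ((1 - t n) *\<^sub>R F t0)" by (rule norm_triangle_ineq)
    also have "\<dots> = t n * norm (F t1) + (1 - t n) * norm (F t0)" using tn by simp
    also have "\<dots> \<le> t n * B + (1 - t n) * B"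
      using tn h1 h0 by (intro add_mono mult_left_mono) auto
    finally show "norm (F t) \<le> B" by (simp add: algebra_simps)
  qed
qed

context qsb begin

lemma tail_dom: "\<exists>M K. K \<ge> 0 \<and> (\<forall>w b N. norm (\<Sum>i<N. b i *\<^sub>R e (2*(i+M) + of_bool (w i))) \<le> K * norm (\<Sum>i<N. b i *\<^sub>R e (2*(i+M))))"
proof -
  from cylinder obtain K M s where KMs0: "\<forall>t. (\<forall>j<M. t j = s j) \<longrightarrow> (\<forall>a N. norm (V t a N) \<le> K * norm (V0 a N))"
    by (elim exE)
  have KMs: "norm (V t a N) \<le> K * norm (V0 a N)" if "\<forall>j<M. t j = s j" for t a N
    using KMs0 that by simp
  have "norm (\<Sum>i<N. b i *\<^sub>R e (2*(i+M) + of_bool (w i))) \<le> max K 0 * norm (\<Sum>i<N. b i *\<^sub>R e (2*(i+M)))" for w b N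
  proof -
    define t where "t j = (if j < M then s j else w (j - M))" for j
    define a where "a j = (if j < M then 0 else b (j - M))" for j
    have "V t a (N+M) = (\<Sum>j<N+M. if j < M then 0 else b (j - M) *\<^sub>R e (2*((j-M)+M) + of_bool (w (j - M))))"
      unfolding V_def by (rule sum.cong) (auto simp: a_def t_def)
    also have "\<dots> = (\<Sum>i<N. b i *\<^sub>R e (2*(i+M) + of_bool (w i)))" by (rule sum_shift_zero)
    finally have 1: "V t a (N+M) = (\<Sum>i<N. b i *\<^sub>R e (2*(i+M) + of_bool (w i)))" .
    have "V0 a (N+M) = (\<Sum>j<N+M. if j < M then 0 else b (j - M) *\<^sub>R e (2*((j-M)+M)))"
      unfolding V0_def by (rule sum.cong) (auto simp: a_def)
    also have "\<dots> = (\<Sum>i<N. b i *\<^sub>R e (2*(i+M)))" by (rule sum_shift_zero)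
    finally have 2: "V0 a (N+M) = (\<Sum>i<N. b i *\<^sub>R e (2*(i+M)))" .
    have "norm (V t a (N+M)) \<le> K * norm (V0 a (N+M))" by (rule KMs) (simp add: t_def)
    also have "\<dots> \<le> max K 0 * norm (V0 a (N+M))" by (intro mult_right_mono) auto
    finally show ?thesis using 1 2 by simp
  qed
  then show ?thesis by (intro exI[of _ M] exI[of _ "max K 0"]) auto
qed

lemma Dbound_ex: "\<exists>M G. G \<ge> 0 \<and> (\<forall>t c b N. c \<ge> 0 \<longrightarrow> (\<forall>i. \<bar>t i\<bar> \<le> c) \<longrightarrow>
    norm (\<Sum>i<N. (b i * t i) *\<^sub>R (e (2*(i+M)+1) - e (2*(i+M)))) \<le> G * c * norm (\<Sum>i<N. b i *\<^sub>R e i))"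
proof -
  obtain M K where K: "K \<ge> 0" "\<And>w b N. norm (\<Sum>i<N. b i *\<^sub>R e (2*(i+M) + of_bool (w i))) \<le> K * norm (\<Sum>i<N. b i *\<^sub>R e (2*(i+M)))"
    using tail_dom by blast
  have smi: "strict_mono (\<lambda>i::nat. i)" by (rule strict_monoI) simp
  have sml: "strict_mono (\<lambda>i::nat. 2*(i+M))" by (rule strict_monoI) simp
  have "dominates (e \<circ> (\<lambda>i. i)) (e \<circ> (\<lambda>i. 2*(i+M)))"
    using qs smi sml unfolding quasisubsymmetric_def by simp
  then obtain C1 where C1: "C1 > 0" "\<And>b N. norm (\<Sum>i<N. b i *\<^sub>R e (2*(i+M))) \<le> C1 * norm (\<Sum>i<N. b i *\<^sub>R e i)"
    unfolding dominates_def o_def by blast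
  define d where "d i = e (2*(i+M)+1) - e (2*(i+M))" for i
  define W where "W w b N = (\<Sum>i<N. b i *\<^sub>R e (2*(i+M) + of_bool (w i)))" for w b N
  define E where "E b N = (\<Sum>i<N. b i *\<^sub>R e i)" for b N
  have WE: "norm (W w b N) \<le> K * C1 * norm (E b N)" for w b N
  proof -
    have "norm (W w b N) \<le> K * norm (\<Sum>i<N. b i *\<^sub>R e (2*(i+M)))" unfolding W_def by (rule K(2))
    also have "\<dots> \<le> K * (C1 * norm (E b N))" unfolding E_def by (intro mult_left_mono C1(2) K(1))
    finally show ?thesis by simp
  qed
  define F where "F b N t = (\<Sum>i<N. (b i * t i) *\<^sub>R d i)" for b N t
  have Flin: "F b N (\<lambda>i. \<alpha> * t i + \<beta> * s i) = \<alpha> *\<^sub>R F b N t + \<beta> *\<^sub>R F b N s" for b N t s \<alpha> \<beta>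
  proof -
    have "F b N (\<lambda>i. \<alpha> * t i + \<beta> * s i) = (\<Sum>i<N. \<alpha> *\<^sub>R ((b i * t i) *\<^sub>R d i) + \<beta> *\<^sub>R ((b i * s i) *\<^sub>R d i))"
      unfolding F_def by (rule sum.cong) (simp_all add: algebra_simps)
    then show ?thesis by (simp add: F_def sum.distrib scaleR_sum_right)
  qed
  have Find: "norm (F b N (\<lambda>i. of_bool (w i))) \<le> 2 * K * C1 * norm (E b N)" for b N w
  proof -
    have "F b N (\<lambda>i. of_bool (w i)) = W w b N - W (\<lambda>_. False) b N"
      unfolding F_def W_def d_def sum_subtractf[symmetric] by (rule sum.cong) (auto simp: algebra_simps)
    then have "norm (F b N (\<lambda>i. of_bool (w i))) \<le> norm (W w b N) + norm (W (\<lambda>_. False) b N)"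
      by (simp add: norm_triangle_ineq4)
    also have "\<dots> \<le> K * C1 * norm (E b N) + K * C1 * norm (E b N)" by (intro add_mono WE)
    finally show ?thesis by (simp add: algebra_simps)
  qed
  have F01: "norm (F b N u) \<le> 2 * K * C1 * norm (E b N)" if u: "\<forall>i. 0 \<le> u i \<and> u i \<le> 1" for b N u
  proof -
    define u' where "u' i = (if i < N then u i else 0)" for i
    have "F b N u' = F b N u" unfolding F_def u'_def by (rule sum.cong) auto
    moreover have "norm (F b N u') \<le> 2 * K * C1 * norm (E b N)"
      using cube_bound[of "F b N", OF Flin Find, of u' N] u by (auto simp: u'_def)
    ultimately show ?thesis by simp
  qed
  have "norm (F b N t) \<le> (4 * K * C1) * c * norm (E b N)" if c: "c \<ge> 0" "\<forall>i. \<bar>t i\<bar> \<le> c" for t c b N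
  proof (cases "c = 0")
    case True
    then have "t = (\<lambda>i. 0)" using c by (auto simp: fun_eq_iff)
    then show ?thesis by (simp add: F_def True)
  next
    case False
    then have cpos: "c > 0" using c by simp
    define u where "u i = max (t i) 0 / c" for i
    define v where "v i = max (- t i) 0 / c" for i
    have uv: "\<forall>i. 0 \<le> u i \<and> u i \<le> 1" "\<forall>i. 0 \<le> v i \<and> v i \<le> 1"
      using c cpos by (auto simp: u_def v_def field_simps abs_le_iff)
    have "t = (\<lambda>i. c * u i + (- c) * v i)" using cpos by (auto simp: fun_eq_iff u_def v_def max_def)
    then have "F b N t = F b N (\<lambda>i. c * u i + (- c) * v i)" by (rule arg_cong[where f="F b N"])
    also have "\<dots> = c *\<^sub>R F b N u + (- c) *\<^sub>R F b N v" by (rule Flin)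
    finally have "norm (F b N t) = norm (c *\<^sub>R F b N u + (- c) *\<^sub>R F b N v)" by simp
    also have "\<dots> \<le> norm (c *\<^sub>R F b N u) + norm ((- c) *\<^sub>R F b N v)" by (rule norm_triangle_ineq)
    also have "\<dots> = c * norm (F b N u) + c * norm (F b N v)" using cpos by simp
    finally have "norm (F b N t) \<le> c * norm (F b N u) + c * norm (F b N v)" .
    also have "\<dots> \<le> c * (2 * K * C1 * norm (E b N)) + c * (2 * K * C1 * norm (E b N))"
      using cpos F01[OF uv(1)] F01[OF uv(2)] by (intro add_mono mult_left_mono) auto
    finally show ?thesis by (simp add: algebra_simps)
  qed
  moreover have "4 * K * C1 \<ge> 0" using K(1) C1(1) by simp
  ultimately show ?thesis unfolding F_def d_def E_def by blast
qed

end

lemma sum_restrict_ivl: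
  fixes f :: "nat \<Rightarrow> 'b::comm_monoid_add"
  shows "(\<Sum>i<n. if m \<le> i then f i else 0) = sum f {m..<n}"
  by (induction n) (auto simp: add.commute)

context qsb begin

definition Dbd :: "nat \<Rightarrow> real \<Rightarrow> bool" where
  "Dbd M G \<longleftrightarrow> G \<ge> 0 \<and> (\<forall>t c b N. c \<ge> 0 \<longrightarrow> (\<forall>i. \<bar>t i\<bar> \<le> c) \<longrightarrow>
    norm (\<Sum>i<N. (b i * t i) *\<^sub>R (e (2*(i+M)+1) - e (2*(i+M)))) \<le> G * c * norm (\<Sum>i<N. b i *\<^sub>R e i))"

definition dd :: "nat \<Rightarrow> nat \<Rightarrow> 'a" where
  "dd M i = e (2*(i+M)+1) - e (2*(i+M))"

definition Dv :: "nat \<Rightarrow> (nat \<Rightarrow> real) \<Rightarrow> 'a \<Rightarrow> 'a" where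
  "Dv M t x = (\<Sum>i. (coef x i * t i) *\<^sub>R dd M i)"

lemma Dbd_ex: "\<exists>M G. Dbd M G"
  using Dbound_ex unfolding Dbd_def by blast

lemma Dbd_bound:
  assumes "Dbd M G" "c \<ge> 0" "\<And>i. \<bar>t i\<bar> \<le> c"
  shows "norm (\<Sum>i<N. (b i * t i) *\<^sub>R dd M i) \<le> G * c * norm (\<Sum>i<N. b i *\<^sub>R e i)"
  using assms unfolding Dbd_def dd_def by blast

lemma Dv_sums:
  assumes D: "Dbd M G" and c: "c \<ge> 0" "\<And>i. \<bar>t i\<bar> \<le> c"
  shows "(\<lambda>i. (coef x i * t i) *\<^sub>R dd M i) sums Dv M t x"
proof -
  have G: "G \<ge> 0" using D by (simp add: Dbd_def)
  have gc: "G * c \<ge> 0" using G c(1) by (rule mult_nonneg_nonneg)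
  have "summable (\<lambda>i. (coef x i * t i) *\<^sub>R dd M i)"
    unfolding summable_Cauchy
  proof (intro allI impI)
    fix \<epsilon> :: real assume \<epsilon>: "\<epsilon> > 0"
    have "Cauchy (\<lambda>N. P N x)" using P_tendsto by (rule LIMSEQ_imp_Cauchy)
    moreover have "\<epsilon> / (G * c + 1) > 0" using \<epsilon> gc by simp
    ultimately obtain N0 where N0: "\<And>m n. m \<ge> N0 \<Longrightarrow> n \<ge> N0 \<Longrightarrow> dist (P m x) (P n x) < \<epsilon> / (G * c + 1)"
      unfolding Cauchy_def by blast
    show "\<exists>N. \<forall>m\<ge>N. \<forall>n. norm (sum (\<lambda>i. (coef x i * t i) *\<^sub>R dd M i) {m..<n}) < \<epsilon>"
    proof (intro exI allI impI)
      fix m n assume m: "m \<ge> N0"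
      show "norm (sum (\<lambda>i. (coef x i * t i) *\<^sub>R dd M i) {m..<n}) < \<epsilon>"
      proof (cases "m \<le> n")
        case False
        then show ?thesis using \<epsilon> by simp
      next
        case True
        define b where "b i = (if m \<le> i then coef x i else 0)" for i
        have 1: "sum (\<lambda>i. (coef x i * t i) *\<^sub>R dd M i) {m..<n} = (\<Sum>i<n. (b i * t i) *\<^sub>R dd M i)"
          unfolding b_def sum_restrict_ivl[symmetric] by (rule sum.cong) auto
        have 2: "(\<Sum>i<n. b i *\<^sub>R e i) = P n x - P m x"
        proof -
          have "(\<Sum>i<n. b i *\<^sub>R e i) = sum (\<lambda>i. coef x i *\<^sub>R e i) {m..<n}"
            unfolding b_def sum_restrict_ivl[symmetric] by (rule sum.cong) auto
          also have "\<dots> = P n x - P m x"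
            unfolding P_def lessThan_atLeast0 using sum_diff_nat_ivl[of 0 m n "\<lambda>i. coef x i *\<^sub>R e i"] True by simp
          finally show ?thesis .
        qed
        have "norm (P n x - P m x) < \<epsilon> / (G * c + 1)"
          using N0[of n m] m True by (simp add: dist_norm)
        then have "G * c * norm (P n x - P m x) \<le> G * c * (\<epsilon> / (G * c + 1))"
          using gc by (intro mult_left_mono) auto
        also have "\<dots> < \<epsilon>" using gc \<epsilon> by (simp add: field_simps)
        finally have "G * c * norm (P n x - P m x) < \<epsilon>" .
        moreover have "norm (\<Sum>i<n. (b i * t i) *\<^sub>R dd M i) \<le> G * c * norm (\<Sum>i<n. b i *\<^sub>R e i)"
          by (rule Dbd_bound[OF D c])
        ultimately show ?thesis using 1 2 by simp
      qed
    qed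
  qed
  then show ?thesis unfolding Dv_def by (rule summable_sums)
qed

lemma Dv_bound:
  assumes D: "Dbd M G" and c: "c \<ge> 0" "\<And>i. \<bar>t i\<bar> \<le> c"
  shows "norm (Dv M t x) \<le> G * c * norm x"
proof -
  have "(\<lambda>N. norm (\<Sum>i<N. (coef x i * t i) *\<^sub>R dd M i)) \<longlonglongrightarrow> norm (Dv M t x)"
    using Dv_sums[OF D c] unfolding sums_def by (rule tendsto_norm)
  moreover have "(\<lambda>N. G * c * norm (P N x)) \<longlonglongrightarrow> G * c * norm x"
    by (intro tendsto_mult tendsto_const tendsto_norm P_tendsto)
  moreover have "\<forall>N. norm (\<Sum>i<N. (coef x i * t i) *\<^sub>R dd M i) \<le> G * c * norm (P N x)"
    unfolding P_def by (intro allI Dbd_bound[OF D c])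
  ultimately show ?thesis by (intro LIMSEQ_le) auto
qed

lemma Dv_add:
  assumes D: "Dbd M G" and c: "c \<ge> 0" "\<And>i. \<bar>t i\<bar> \<le> c"
  shows "Dv M t (x + y) = Dv M t x + Dv M t y"
proof -
  have A: "(\<lambda>i. (coef x i * t i) *\<^sub>R dd M i + (coef y i * t i) *\<^sub>R dd M i) sums (Dv M t x + Dv M t y)"
    by (intro sums_add Dv_sums[OF D c])
  have B: "(\<lambda>i. (coef x i * t i) *\<^sub>R dd M i + (coef y i * t i) *\<^sub>R dd M i) = (\<lambda>i. (coef (x + y) i * t i) *\<^sub>R dd M i)"
    by (simp add: coef_add fun_eq_iff algebra_simps)
  have "(\<lambda>i. (coef (x + y) i * t i) *\<^sub>R dd M i) sums (Dv M t x + Dv M t y)" using A unfolding B .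
  then show ?thesis by (rule sums_unique2[OF Dv_sums[OF D c, of "x + y"]])
qed

lemma Dv_scale:
  assumes D: "Dbd M G" and c: "c \<ge> 0" "\<And>i. \<bar>t i\<bar> \<le> c"
  shows "Dv M t (r *\<^sub>R x) = r *\<^sub>R Dv M t x"
proof -
  have A: "(\<lambda>i. r *\<^sub>R ((coef x i * t i) *\<^sub>R dd M i)) sums (r *\<^sub>R Dv M t x)"
    by (intro sums_scaleR_right Dv_sums[OF D c])
  have B: "(\<lambda>i. r *\<^sub>R ((coef x i * t i) *\<^sub>R dd M i)) = (\<lambda>i. (coef (r *\<^sub>R x) i * t i) *\<^sub>R dd M i)"
    by (simp add: coef_scale fun_eq_iff algebra_simps)
  have "(\<lambda>i. (coef (r *\<^sub>R x) i * t i) *\<^sub>R dd M i) sums (r *\<^sub>R Dv M t x)" using A unfolding B .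
  then show ?thesis by (rule sums_unique2[OF Dv_sums[OF D c, of "r *\<^sub>R x"]])
qed

lemma Dv_tadd:
  assumes D: "Dbd M G" and c: "c \<ge> 0" "\<And>i. \<bar>t i\<bar> \<le> c" and c': "c' \<ge> 0" "\<And>i. \<bar>s i\<bar> \<le> c'"
  shows "Dv M (\<lambda>i. t i + s i) x = Dv M t x + Dv M s x"
proof -
  have c2a: "c + c' \<ge> 0" using c c' by simp
  have c2b: "\<bar>t i + s i\<bar> \<le> c + c'" for i
    using abs_triangle_ineq[of "t i" "s i"] c(2)[of i] c'(2)[of i] by linarith
  note c2 = c2a c2b
  have A: "(\<lambda>i. (coef x i * t i) *\<^sub>R dd M i + (coef x i * s i) *\<^sub>R dd M i) sums (Dv M t x + Dv M s x)"
    by (intro sums_add Dv_sums[OF D c] Dv_sums[OF D c'])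
  have B: "(\<lambda>i. (coef x i * t i) *\<^sub>R dd M i + (coef x i * s i) *\<^sub>R dd M i) = (\<lambda>i. (coef x i * (t i + s i)) *\<^sub>R dd M i)"
    by (simp add: fun_eq_iff algebra_simps)
  have "(\<lambda>i. (coef x i * (t i + s i)) *\<^sub>R dd M i) sums (Dv M t x + Dv M s x)" using A unfolding B .
  then show ?thesis by (rule sums_unique2[OF Dv_sums[OF D c2, of x]])
qed

lemma Dv_tscale:
  assumes D: "Dbd M G" and c: "c \<ge> 0" "\<And>i. \<bar>t i\<bar> \<le> c"
  shows "Dv M (\<lambda>i. r * t i) x = r *\<^sub>R Dv M t x"
proof -
  have c2: "\<bar>r\<bar> * c \<ge> 0" "\<And>i. \<bar>r * t i\<bar> \<le> \<bar>r\<bar> * c"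
    using c by (auto simp: abs_mult intro: mult_left_mono)
  have A: "(\<lambda>i. r *\<^sub>R ((coef x i * t i) *\<^sub>R dd M i)) sums (r *\<^sub>R Dv M t x)"
    by (intro sums_scaleR_right Dv_sums[OF D c])
  have B: "(\<lambda>i. r *\<^sub>R ((coef x i * t i) *\<^sub>R dd M i)) = (\<lambda>i. (coef x i * (r * t i)) *\<^sub>R dd M i)"
    by (simp add: fun_eq_iff algebra_simps)
  have "(\<lambda>i. (coef x i * (r * t i)) *\<^sub>R dd M i) sums (r *\<^sub>R Dv M t x)" using A unfolding B .
  then show ?thesis by (rule sums_unique2[OF Dv_sums[OF D c2, of x]])
qed

lemma Dv_e:
  assumes D: "Dbd M G" and c: "c \<ge> 0" "\<And>i. \<bar>t i\<bar> \<le> c"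
  shows "Dv M t (e j) = t j *\<^sub>R dd M j"
proof -
  have A: "(\<lambda>i. if i = j then t i *\<^sub>R dd M i else 0) sums (t j *\<^sub>R dd M j)" by (rule sums_single)
  have B: "(\<lambda>i. if i = j then t i *\<^sub>R dd M i else 0) = (\<lambda>i. (coef (e j) i * t i) *\<^sub>R dd M i)"
    by (simp add: coef_e fun_eq_iff)
  have "(\<lambda>i. (coef (e j) i * t i) *\<^sub>R dd M i) sums (t j *\<^sub>R dd M j)" using A unfolding B .
  then show ?thesis by (rule sums_unique2[OF Dv_sums[OF D c, of "e j"]])
qed

lemma coef_dd: "coef (dd M j) (2*(j+M)) = -1"
  by (simp add: dd_def coef_diff coef_e)

end

context qsb begin

theorem main: "\<exists>T :: (nat \<Rightarrow>\<^sub>C real) \<Rightarrow> (('a \<Rightarrow>\<^sub>L real) \<Rightarrow>\<^sub>L ('a \<Rightarrow>\<^sub>L real)). embeds_isomorphically T"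
proof -
  obtain M G where D: "Dbd M G" using Dbd_ex by blast
  have G: "G \<ge> 0" using D by (simp add: Dbd_def)
  obtain \<beta> where \<beta>: "\<beta> > 0" "\<And>x. q x \<le> \<beta> * norm x" using basis_const by blast
  obtain a0 b0 where ab: "0 < a0" "\<And>n. a0 \<le> norm (e n)" "\<And>n. norm (e n) \<le> b0" using semiE by blast
  have b0: "b0 > 0" using ab(1) ab(2)[of 0] ab(3)[of 0] by linarith
  have cb: "\<bar>coef x n\<bar> \<le> (2*\<beta>/a0) * norm x" for x n
  proof -
    have "\<bar>coef x n\<bar> \<le> 2 * q x / a0" by (rule coef_bound_q[OF ab(1) ab(2)])
    also have "\<dots> \<le> 2 * (\<beta> * norm x) / a0" using \<beta>(2)[of x] ab(1) by (simp add: divide_right_mono)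
    finally show ?thesis by simp
  qed
  have blc: "bounded_linear (\<lambda>x. coef x n)" for n
  proof (rule bounded_linear_intro[where K="2*\<beta>/a0"])
    show "coef (x + y) n = coef x n + coef y n" for x y by (simp add: coef_add)
    show "coef (r *\<^sub>R x) n = r *\<^sub>R coef x n" for r x by (simp add: coef_scale)
    show "norm (coef x n) \<le> norm x * (2*\<beta>/a0)" for x using cb[of x n] by (simp add: mult.commute)
  qed
  define cf where "cf n = Blinfun (\<lambda>x. coef x n)" for n
  have cf_apply: "blinfun_apply (cf n) x = coef x n" for n x
    by (simp add: cf_def bounded_linear_Blinfun_apply[OF blc])
  have cf_norm: "norm (cf n) \<le> 2*\<beta>/a0" for n
    by (rule norm_blinfun_bound) (use \<beta>(1) ab(1) cb in \<open>simp_all add: cf_apply\<close>)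
  have tb: "\<bar>apply_bcontfun t i\<bar> \<le> norm t" for t :: "nat \<Rightarrow>\<^sub>C real" and i
    using norm_bounded[of t i] by simp
  have blD: "bounded_linear (Dv M (apply_bcontfun t))" for t
  proof (rule bounded_linear_intro[where K="G * norm t"])
    show "Dv M (apply_bcontfun t) (x + y) = Dv M (apply_bcontfun t) x + Dv M (apply_bcontfun t) y" for x y
      by (rule Dv_add[OF D norm_ge_zero tb])
    show "Dv M (apply_bcontfun t) (r *\<^sub>R x) = r *\<^sub>R Dv M (apply_bcontfun t) x" for r x
      by (rule Dv_scale[OF D norm_ge_zero tb])
    show "norm (Dv M (apply_bcontfun t) x) \<le> norm x * (G * norm t)" for x
    proof -
      have "norm (Dv M (apply_bcontfun t) x) \<le> G * norm t * norm x" by (rule Dv_bound[OF D norm_ge_zero tb])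
      then show ?thesis by (simp add: algebra_simps)
    qed
  qed
  define Dop where "Dop t = Blinfun (Dv M (apply_bcontfun t))" for t
  have Dop_apply: "blinfun_apply (Dop t) = Dv M (apply_bcontfun t)" for t
    by (simp add: Dop_def bounded_linear_Blinfun_apply[OF blD])
  have Dop_norm: "norm (Dop t) \<le> G * norm t" for t
  proof (rule norm_blinfun_bound)
    show "0 \<le> G * norm t" using G by simp
    show "norm (blinfun_apply (Dop t) x) \<le> G * norm t * norm x" for x
      unfolding Dop_apply by (rule Dv_bound[OF D norm_ge_zero tb])
  qed
  have Dop_add: "Dop (t + s) = Dop t + Dop s" for t s
  proof (rule blinfun_eqI)
    fix x
    have "Dv M (\<lambda>i. apply_bcontfun t i + apply_bcontfun s i) x = Dv M (apply_bcontfun t) x + Dv M (apply_bcontfun s) x"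
      by (rule Dv_tadd[OF D norm_ge_zero tb norm_ge_zero tb])
    then show "blinfun_apply (Dop (t + s)) x = blinfun_apply (Dop t + Dop s) x"
      by (simp add: Dop_apply plus_blinfun.rep_eq)
  qed
  have Dop_scale: "Dop (r *\<^sub>R t) = r *\<^sub>R Dop t" for r t
  proof (rule blinfun_eqI)
    fix x
    have "Dv M (\<lambda>i. r * apply_bcontfun t i) x = r *\<^sub>R Dv M (apply_bcontfun t) x"
      by (rule Dv_tscale[OF D norm_ge_zero tb])
    then show "blinfun_apply (Dop (r *\<^sub>R t)) x = blinfun_apply (r *\<^sub>R Dop t) x"
      by (simp add: Dop_apply scaleR_blinfun.rep_eq)
  qed
  have blC: "bounded_linear (\<lambda>\<phi>::'a \<Rightarrow>\<^sub>L real. \<phi> o\<^sub>L Dd)" for Dd :: "'a \<Rightarrow>\<^sub>L 'a"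
    by (rule bounded_bilinear.bounded_linear_left[OF bounded_bilinear_blinfun_compose])
  define T where "T t = Blinfun (\<lambda>\<phi>::'a \<Rightarrow>\<^sub>L real. \<phi> o\<^sub>L Dop t)" for t
  have T_apply: "blinfun_apply (T t) \<phi> = \<phi> o\<^sub>L Dop t" for t \<phi>
    by (simp add: T_def bounded_linear_Blinfun_apply[OF blC])
  have blT: "bounded_linear T"
  proof (rule bounded_linear_intro[where K=G])
    show "T (t + s) = T t + T s" for t s
      by (intro blinfun_eqI) (simp add: T_apply Dop_add plus_blinfun.rep_eq blinfun.bilinear_simps)
    show "T (r *\<^sub>R t) = r *\<^sub>R T t" for r t
      by (intro blinfun_eqI) (simp add: T_apply Dop_scale scaleR_blinfun.rep_eq blinfun.bilinear_simps)
    show "norm (T t) \<le> norm t * G" for t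
    proof (rule norm_blinfun_bound)
      show "0 \<le> norm t * G" using G by simp
      show "norm (blinfun_apply (T t) \<phi>) \<le> norm t * G * norm \<phi>" for \<phi>
      proof -
        have "norm (blinfun_apply (T t) \<phi>) \<le> norm \<phi> * norm (Dop t)"
          unfolding T_apply by (rule norm_blinfun_compose)
        also have "\<dots> \<le> norm \<phi> * (G * norm t)" by (intro mult_left_mono Dop_norm) simp
        finally show ?thesis by (simp add: algebra_simps)
      qed
    qed
  qed
  define k where "k = 2*\<beta>/a0*b0"
  have k: "k > 0" using \<beta>(1) ab(1) b0 by (simp add: k_def)
  have lower: "norm t \<le> k * norm (T t)" for t
  proof (rule norm_bound)
    fix j
    define \<phi> where "\<phi> = cf (2*(j+M))"
    have "blinfun_apply (blinfun_apply (T t) \<phi>) (e j) = coef (Dv M (apply_bcontfun t) (e j)) (2*(j+M))"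
      by (simp add: T_apply Dop_apply cf_apply \<phi>_def)
    also have "\<dots> = - apply_bcontfun t j"
      using coef_dd[of M j] by (simp add: Dv_e[OF D norm_ge_zero tb] coef_scale)
    finally have eq: "blinfun_apply (blinfun_apply (T t) \<phi>) (e j) = - apply_bcontfun t j" .
    have "norm (blinfun_apply (blinfun_apply (T t) \<phi>) (e j)) \<le> norm (blinfun_apply (T t) \<phi>) * norm (e j)"
      by (rule norm_blinfun)
    also have "\<dots> \<le> (norm (T t) * norm \<phi>) * b0"
      by (intro mult_mono norm_blinfun ab(3)) auto
    also have "\<dots> \<le> (norm (T t) * (2*\<beta>/a0)) * b0"
      by (intro mult_right_mono mult_left_mono) (auto simp: \<phi>_def cf_norm b0 less_imp_le)
    finally show "norm (apply_bcontfun t j) \<le> k * norm (T t)" using eq by (simp add: k_def algebra_simps)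
  qed
  have "\<forall>t. inverse k * norm t \<le> norm (T t)"
  proof
    fix t
    show "inverse k * norm t \<le> norm (T t)" using k lower[of t] by (simp add: field_simps)
  qed
  moreover have "inverse k > 0" using k by simp
  ultimately have "embeds_isomorphically T" unfolding embeds_isomorphically_def using blT by blast
  then show ?thesis by blast
qed

end

theorem corollary2p6:
  fixes e :: "nat \<Rightarrow> 'a::banach"
  assumes "schauder_basis e" and "seminormalized e" and "quasisubsymmetric e"
  shows "\<exists>T :: (nat \<Rightarrow>\<^sub>C real) \<Rightarrow> (('a \<Rightarrow>\<^sub>L real) \<Rightarrow>\<^sub>L ('a \<Rightarrow>\<^sub>L real)).
           embeds_isomorphically T"
proof -
  interpret qsb e using assms by (rule qsb.intro)
  show ?thesis by (rule main)
qed

end
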